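(* Let $\langle X,\tau\rangle$ be a topological space that is a continuous open image of the Sorgenfrey line, and let $F\subseteq X$ be a nonempty closed subset such that the subspace $\langle F,\tau\upharpoonright F\rangle$ has no isolated points. Then $\langle F,\tau\upharpoonright F\rangle$ is a continuous open image of the Sorgenfrey line.
   Context: The Sorgenfrey line is $\mathbb R$ with topology generated by $\{[a,b)\}$; "continuous open image" means image under a continuous open surjection. *)

theory Defs
  imports "HOL-Analysis.Analysis"
begin

definition sorgenfrey_line :: "real topology" where
  "sorgenfrey_line = topology_generated_by {{a..<b} | a b. a < b}"

definition cont_open_image_of_sorgenfrey :: "'a topology \<Rightarrow> bool" where
  "cont_open_image_of_sorgenfrey X \<longleftrightarrow>
     (\<exists>f. continuous_map sorgenfrey_line X f \<and> open_map sorgenfrey_line X f \<and>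
          f ` topspace sorgenfrey_line = topspace X)"

definition no_isolated_points :: "'a topology \<Rightarrow> bool" where
  "no_isolated_points X \<longleftrightarrow> (\<forall>x\<in>topspace X. \<not> openin X {x})"

end

theory Submission
  imports Defs
begin


lemma S_topspace[simp]: "topspace sorgenfrey_line = UNIV"
proof -
  have "\<Union>{{a..<b} | a b. a < b} = (UNIV::real set)"
  proof (rule set_eqI, rule iffI)
    fix x :: real
    have "{x..<x+1} \<in> {{a..<b} | a b. a < b}" by force
    moreover have "x \<in> {x..<x+1}" by simp
    ultimately show "x \<in> \<Union>{{a..<b} | a b. a < b}" by blast
  qed simp
  then show ?thesis unfolding sorgenfrey_line_def by simp
qed

lemma S_open: "openin sorgenfrey_line U \<longleftrightarrow> (\<forall>x\<in>U. \<exists>e>0. {x..<x+e} \<subseteq> U)"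
proof
  assume "openin sorgenfrey_line U"
  then have "generate_topology_on {{a..<b} | a b. a < b} U"
    unfolding sorgenfrey_line_def by (simp add: openin_topology_generated_by_iff)
  then show "\<forall>x\<in>U. \<exists>e>0. {x..<x+e} \<subseteq> U"
  proof induction
    case Empty then show ?case by simp
  next
    case (Int a b)
    show ?case
    proof
      fix x assume "x \<in> a \<inter> b"
      then obtain e1 e2 where "e1>0" "{x..<x+e1} \<subseteq> a" "e2>0" "{x..<x+e2} \<subseteq> b" using Int by blast
      moreover have "{x..<x+min e1 e2} \<subseteq> {x..<x+e1}" "{x..<x+min e1 e2} \<subseteq> {x..<x+e2}" by auto
      ultimately show "\<exists>e>0. {x..<x+e} \<subseteq> a \<inter> b"
        by (intro exI[of _ "min e1 e2"] conjI) (simp, blast)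
    qed
  next
    case (UN K) then show ?case by blast
  next
    case (Basis s)
    then obtain a b where "s = {a..<b}" by blast
    then show ?case by (intro ballI exI[of _ "b - _"]) auto
  qed
next
  assume H: "\<forall>x\<in>U. \<exists>e>0. {x..<x+e} \<subseteq> U"
  then obtain e where e: "\<And>x. x \<in> U \<Longrightarrow> e x > 0 \<and> {x..<x + e x} \<subseteq> U" by metis
  have "U = \<Union>((\<lambda>x. {x..<x + e x}) ` U)" using e by fastforce
  moreover have "generate_topology_on {{a..<b} | a b. a < b} (\<Union>((\<lambda>x. {x..<x + e x}) ` U))"
  proof (rule generate_topology_on.UN)
    fix k assume "k \<in> (\<lambda>x. {x..<x + e x}) ` U"
    then obtain x where x: "x \<in> U" "k = {x..<x + e x}" by blast
    then have "k \<in> {{a..<b} | a b. a < b}" using e[OF x(1)] by force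
    then show "generate_topology_on {{a..<b} | a b. a < b} k" by (rule generate_topology_on.Basis)
  qed
  ultimately show "openin sorgenfrey_line U"
    unfolding sorgenfrey_line_def by (simp add: openin_topology_generated_by_iff)
qed



locale piece =
  fixes P :: "real set" and a r :: real
  assumes aP: "a \<in> P" and Psub: "P \<subseteq> {a..<r}"
    and Pinf: "\<And>A. A \<subseteq> P \<Longrightarrow> A \<noteq> {} \<Longrightarrow> Inf A \<in> P"
    and Prd: "\<And>x e. x \<in> P \<Longrightarrow> e > 0 \<Longrightarrow> \<exists>y\<in>P. x < y \<and> y < x + e"
begin

lemma ar: "a < r" using aP Psub by auto

definition split :: "real \<Rightarrow> real \<Rightarrow> real" where
  "split x y = Inf (P \<inter> {(x + Sup (P \<inter> {x..<y}))/2 ..< y})"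

lemma split_props:
  assumes x: "x \<in> P" and xy: "x < y" and l: "P \<inter> {x..<y} \<subseteq> {x..x+l}"
  shows "split x y \<in> P" "x < split x y" "split x y < y"
    "P \<inter> {x..<split x y} \<subseteq> {x..x+l/2}" "P \<inter> {split x y..<y} \<subseteq> {split x y..split x y+l/2}"
proof -
  define S0 where "S0 = P \<inter> {x..<y}"
  define s where "s = Sup S0"
  define mid where "mid = (x + s)/2"
  define T where "T = P \<inter> {mid..<y}"
  have m_def: "split x y = Inf T" unfolding split_def T_def mid_def s_def S0_def by simp
  obtain z where z: "z \<in> P" "x < z" "z < x + (y - x)" using Prd[OF x, of "y-x"] xy by auto
  have S0ne: "S0 \<noteq> {}" using x xy unfolding S0_def by auto
  have S0bdd: "bdd_above S0" unfolding S0_def by (rule bdd_aboveI[of _ y]) auto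
  have "z \<in> S0" using z unfolding S0_def by auto
  then have zs: "z \<le> s" unfolding s_def using S0bdd by (simp add: cSup_upper)
  have sl: "s \<le> x + l" unfolding s_def using l S0ne by (auto intro!: cSup_least simp: S0_def)
  have "mid < s" using z zs unfolding mid_def by simp
  then obtain w where w: "w \<in> S0" "mid < w" using less_cSupE[OF _ S0ne] unfolding s_def by blast
  have wT: "w \<in> T" using w unfolding T_def S0_def by auto
  have Tsub: "T \<subseteq> P" unfolding T_def by auto
  have Tbdd: "bdd_below T" unfolding T_def by (rule bdd_belowI[of _ mid]) auto
  have mP: "Inf T \<in> P" using Pinf[OF Tsub] wT by auto
  have mmid: "mid \<le> Inf T" using wT by (auto intro!: cInf_greatest simp: T_def)
  have mw: "Inf T \<le> w" using wT Tbdd by (simp add: cInf_lower)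
  have xmid: "x < mid" using z zs unfolding mid_def by simp
  show "split x y \<in> P" using mP m_def by simp
  show "x < split x y" using xmid mmid m_def by simp
  show "split x y < y" using mw w unfolding m_def S0_def by auto
  show "P \<inter> {x..<split x y} \<subseteq> {x..x+l/2}"
  proof
    fix c assume c: "c \<in> P \<inter> {x..<split x y}"
    have "c < mid"
    proof (rule ccontr)
      assume "\<not> c < mid"
      then have "c \<in> T" using c mw w unfolding T_def S0_def m_def by auto
      then have "Inf T \<le> c" using Tbdd by (simp add: cInf_lower)
      then show False using c m_def by auto
    qed
    then show "c \<in> {x..x+l/2}" using c sl unfolding mid_def by auto
  qed
  show "P \<inter> {split x y..<y} \<subseteq> {split x y..split x y+l/2}"
  proof
    fix c assume c: "c \<in> P \<inter> {split x y..<y}"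
    then have "c \<in> S0" using \<open>x < split x y\<close> unfolding S0_def by auto
    then have "c \<le> s" unfolding s_def using S0bdd by (simp add: cSup_upper)
    then show "c \<in> {split x y..split x y+l/2}" using c mmid sl m_def unfolding mid_def by auto
  qed
qed


fun E :: "nat \<Rightarrow> nat \<Rightarrow> real" where
  "E 0 k = (if k = 0 then a else r)"
| "E (Suc n) k = (if even k then E n (k div 2) else split (E n (k div 2)) (E n (Suc (k div 2))))"

lemma E_0[simp]: "E n 0 = a"
  by (induction n) auto

lemma E_top[simp]: "E n (2^n) = r"
  by (induction n) auto

lemma E_inv: "k < 2^n \<Longrightarrow> E n k \<in> P \<and> E n k < E n (Suc k) \<and>
     P \<inter> {E n k..<E n (Suc k)} \<subseteq> {E n k .. E n k + (r-a)/2^n}"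
proof (induction n arbitrary: k)
  case 0
  then show ?case using aP Psub ar by auto
next
  case (Suc n)
  define j where "j = k div 2"
  have j: "j < 2^n" using Suc.prems unfolding j_def by auto
  note IH = Suc.IH[OF j]
  define x where "x = E n j"
  define y where "y = E n (Suc j)"
  have x: "x \<in> P" "x < y" and l: "P \<inter> {x..<y} \<subseteq> {x..x+(r-a)/2^n}"
    using IH unfolding x_def y_def by auto
  note sp = split_props[OF x l]
  have e: "(r-a)/2^n/2 = (r-a)/2^(Suc n)" by simp
  show ?case
  proof (cases "even k")
    case True
    then have "E (Suc n) k = x" "E (Suc n) (Suc k) = split x y"
      unfolding x_def y_def j_def by auto
    then show ?thesis using sp x e by auto
  next
    case False
    then have "Suc k div 2 = Suc j" unfolding j_def by presburger
    then have "E (Suc n) k = split x y" "E (Suc n) (Suc k) = y"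
      using False unfolding x_def y_def j_def by auto
    then show ?thesis using sp x e by auto
  qed
qed


lemma E_less: "k < k' \<Longrightarrow> k' \<le> 2^n \<Longrightarrow> E n k < E n k'"
proof (induction k' rule: less_induct)
  case (less k')
  then obtain k0 where k0: "k' = Suc k0" by (cases k') auto
  show ?case
  proof (cases "k = k0")
    case True then show ?thesis using E_inv[of k0 n] less.prems k0 by auto
  next
    case False
    then have "E n k < E n k0" using less k0 by auto
    also have "E n k0 < E n k'" using E_inv[of k0 n] less.prems k0 by auto
    finally show ?thesis .
  qed
qed

lemma E_le: "k \<le> k' \<Longrightarrow> k' \<le> 2^n \<Longrightarrow> E n k \<le> E n k'"
  using E_less[of k k' n] by (cases "k = k'") auto

lemma E_lift: "E (n+m) (k*2^m) = E n k"
proof (induction m)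
  case 0 then show ?case by simp
next
  case (Suc m)
  have "even (k*2^Suc m)" by simp
  moreover have "k*2^Suc m div 2 = k*2^m" by simp
  ultimately show ?case using Suc by simp
qed

lemma E_P: "k < 2^n \<Longrightarrow> E n k \<in> P"
  using E_inv by blast

lemma E_lt_r: "k < 2^n \<Longrightarrow> E n k < r"
  using E_less[of k "2^n" n] by simp

lemma E_mono_le:
  assumes "k \<le> 2^n" "k' \<le> 2^n'" "real k / 2^n \<le> real k' / 2^n'"
  shows "E n k \<le> E n' k'"
proof -
  have "real k * 2^n' \<le> real k' * 2^n"
    using assms(3) by (simp add: field_simps)
  then have "real (k * 2^n') \<le> real (k' * 2^n)" by simp
  then have le: "k * 2^n' \<le> k' * 2^n" by linarith
  have b: "k' * 2^n \<le> 2^(n'+n)" using assms(2) by (simp add: power_add)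
  have "E n k = E (n+n') (k*2^n')" by (simp add: E_lift)
  also have "\<dots> \<le> E (n+n') (k'*2^n)" using E_le[OF le] b by (simp add: add.commute)
  also have "\<dots> = E n' k'" using E_lift[of n' n k'] by (simp add: add.commute)
  finally show ?thesis .
qed

lemma E_mono_less:
  assumes "k \<le> 2^n" "k' \<le> 2^n'" "E n k < E n' k'"
  shows "real k / 2^n < real k' / 2^n'"
  using E_mono_le[OF assms(2,1)] assms(3) by force


lemma density:
  assumes c1: "c1 \<in> P" and "c1 < c2"
  shows "\<exists>n k. k < 2^n \<and> c1 \<le> E n k \<and> E n k < c2"
proof -
  obtain c' where c': "c' \<in> P" "c1 < c'" "c' < c1 + (c2 - c1)" using Prd[OF c1, of "c2 - c1"] assms by auto
  have "0 < (c' - c1)/(r-a)" using c' ar by simp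
  then obtain n where n: "(1/2::real)^n < (c' - c1)/(r-a)" using real_arch_pow_inv[of "(c' - c1)/(r-a)" "1/2::real"] by auto
  have nb: "(r-a)/2^n < c' - c1"
    using n ar by (simp add: field_simps power_divide)
  define K where "K = {k. k \<le> 2^n \<and> E n k \<le> c1}"
  have finK: "finite K" unfolding K_def by auto
  have "0 \<in> K" using c1 Psub unfolding K_def by auto
  then have K_ne: "K \<noteq> {}" by auto
  define k where "k = Max K"
  have kK: "k \<in> K" unfolding k_def using Max_in[OF finK K_ne] .
  have "E n (2^n) > c1" using c1 Psub by auto
  then have "k \<noteq> 2^n" using kK unfolding K_def by auto
  then have klt: "k < 2^n" using kK unfolding K_def by auto
  have "Suc k \<notin> K" using Max_ge[OF finK, of "Suc k"] unfolding k_def[symmetric] by auto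
  then have sk: "E n (Suc k) > c1" using klt unfolding K_def by auto
  have ek: "E n k \<le> c1" using kK unfolding K_def by auto
  have skc: "E n (Suc k) \<le> c'"
  proof (rule ccontr)
    assume "\<not> E n (Suc k) \<le> c'"
    then have "c' \<in> P \<inter> {E n k..<E n (Suc k)}" using c' ek by auto
    then have "c' \<le> E n k + (r-a)/2^n" using E_inv[OF klt] by auto
    then show False using ek nb by linarith
  qed
  have "Suc k \<noteq> 2^n" using skc c' Psub by auto
  then have "Suc k < 2^n" using klt by auto
  then show ?thesis using sk skc c' by (intro exI[of _ n] exI[of _ "Suc k"]) auto
qed


definition hh :: "real \<Rightarrow> real" where
  "hh t = Inf {E n k | n k. k < 2^n \<and> t \<le> real k / 2^n}"

lemma D_ne: assumes "t < 1" shows "{E n k | n k. k < 2^n \<and> t \<le> real k / 2^n} \<noteq> {}"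
proof -
  obtain n where n: "(1/2::real)^n < 1 - t" using real_arch_pow_inv[of "1 - t" "1/2::real"] assms by auto
  have "real (2^n - 1) = 2^n - 1" by (simp add: of_nat_diff)
  then have "real (2^n - 1) / 2^n = 1 - (1/2)^n" by (simp add: field_simps power_divide)
  then have "t \<le> real (2^n - 1) / 2^n" using n by simp
  moreover have "(2::nat)^n - 1 < 2^n" by simp
  ultimately show ?thesis by blast
qed

lemma D_sub: "{E n k | n k. k < 2^n \<and> t \<le> real k / 2^n} \<subseteq> P"
  using E_P by blast

lemma D_bdd: "bdd_below {E n k | n k. k < 2^n \<and> t \<le> real k / 2^n}"
  by (rule bdd_belowI[of _ a]) (use E_P Psub in force)

lemma hh_P: "t < 1 \<Longrightarrow> hh t \<in> P"
  unfolding hh_def using Pinf[OF D_sub D_ne] by blast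

lemma hh_le: "k < 2^n \<Longrightarrow> t \<le> real k / 2^n \<Longrightarrow> hh t \<le> E n k"
  unfolding hh_def by (rule cInf_lower[OF _ D_bdd]) blast

lemma hh_ge: "t < 1 \<Longrightarrow> (\<And>n k. k < 2^n \<Longrightarrow> t \<le> real k / 2^n \<Longrightarrow> c \<le> E n k) \<Longrightarrow> c \<le> hh t"
  unfolding hh_def by (rule cInf_greatest[OF D_ne]) auto

lemma dyadic_between:
  assumes "0 \<le> t" "t < t'"
  shows "\<exists>n k. t < real k / 2^n \<and> real (Suc k) / 2^n < t'"
proof -
  obtain n where n: "(1/2::real)^n < (t' - t)/2" using real_arch_pow_inv[of "(t' - t)/2" "1/2::real"] assms by auto
  have n': "2 / 2^n < t' - t" using n by (simp add: field_simps power_divide)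
  define k where "k = nat \<lfloor>t * 2^n\<rfloor> + 1"
  have fl: "real_of_int \<lfloor>t * 2^n\<rfloor> \<le> t * 2^n" "t * 2^n < real_of_int \<lfloor>t * 2^n\<rfloor> + 1" by linarith+
  have "0 \<le> \<lfloor>t * 2^n\<rfloor>" using assms by simp
  then have rk: "real k = real_of_int \<lfloor>t * 2^n\<rfloor> + 1" unfolding k_def by simp
  have "t * 2^n < real k" using fl rk by simp
  then have 1: "t < real k / 2^n" by (simp add: field_simps)
  have "real (Suc k) \<le> t * 2^n + 2" using fl rk by simp
  then have "real (Suc k) / 2^n \<le> (t * 2^n + 2) / 2^n" by (rule divide_right_mono) simp
  also have "\<dots> = t + 2 / 2^n" by (simp add: field_simps)
  finally have "real (Suc k) / 2^n \<le> t + 2 / 2^n" .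
  then have 2: "real (Suc k) / 2^n < t'" using n' by simp
  show ?thesis using 1 2 by blast
qed

lemma hh_strict: assumes "0 \<le> t" "t < t'" "t' < 1" shows "hh t < hh t'"
proof -
  obtain n k where nk: "t < real k / 2^n" "real (Suc k) / 2^n < t'" using dyadic_between assms by blast
  have "real (Suc k) < t' * 2^n" using nk by (simp add: field_simps)
  moreover have "t' * 2^n < 2^n" using assms(3) by simp
  ultimately have "real (Suc k) < 2^n" by linarith
  then have sk: "Suc k < 2^n" by (metis of_nat_less_iff of_nat_numeral of_nat_power)
  have "hh t \<le> E n k" using hh_le[of k n t] sk nk by simp
  also have "\<dots> < E n (Suc k)" using E_inv[of k n] sk by simp
  also have "\<dots> \<le> hh t'"
  proof (rule hh_ge[OF assms(3)])
    fix n' k' assume "k' < 2^n'" "t' \<le> real k' / 2^n'"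
    then show "E n (Suc k) \<le> E n' k'" using nk sk by (intro E_mono_le) auto
  qed
  finally show ?thesis .
qed


lemma hh_surj: assumes c: "c \<in> P" shows "\<exists>t. 0 \<le> t \<and> t < 1 \<and> hh t = c"
proof -
  define T where "T = {real k / 2^n | n k. k < 2^n \<and> c \<le> E n k}"
  have "c < r" using c Psub by auto
  then obtain n0 k0 where nk0: "k0 < 2^n0" "c \<le> E n0 k0" using density[OF c] by blast
  then have T_ne: "T \<noteq> {}" unfolding T_def by blast
  have T_bdd: "bdd_below T" unfolding T_def by (rule bdd_belowI[of _ 0]) auto
  define t where "t = Inf T"
  have t0: "0 \<le> t" unfolding t_def by (rule cInf_greatest[OF T_ne]) (auto simp: T_def)
  have "real k0 / 2^n0 \<in> T" using nk0 unfolding T_def by blast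
  then have "t \<le> real k0 / 2^n0" unfolding t_def using T_bdd by (simp add: cInf_lower)
  moreover have "real k0 / 2^n0 < 1"
  proof -
    have "real k0 < 2^n0" using nk0(1) by (metis of_nat_less_iff of_nat_numeral of_nat_power)
    then show ?thesis by (simp add: field_simps)
  qed
  ultimately have t1: "t < 1" by linarith
  have ge: "c \<le> hh t"
  proof (rule hh_ge[OF t1])
    fix n k assume nk: "k < 2^n" "t \<le> real k / 2^n"
    show "c \<le> E n k"
    proof (rule ccontr)
      assume "\<not> c \<le> E n k"
      then have lt: "E n k < c" by simp
      obtain c'' where c'': "c'' \<in> P" "E n k < c''" "c'' < E n k + (c - E n k)"
        using Prd[OF E_P[OF nk(1)], of "c - E n k"] lt by auto
      obtain n' k' where nk': "k' < 2^n'" "c'' \<le> E n' k'" "E n' k' < c"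
        using density[OF c''(1), of c] c'' by auto
      have "real k / 2^n < real k' / 2^n'"
        using E_mono_less[of k n k' n'] nk nk' c'' by auto
      then have "Inf T < real k' / 2^n'" using nk unfolding t_def by simp
      then obtain d where d: "d \<in> T" "d < real k' / 2^n'" using cInf_lessD[OF T_ne] by blast
      then obtain n'' k'' where d': "d = real k'' / 2^n''" "k'' < 2^n''" "c \<le> E n'' k''"
        unfolding T_def by blast
      have "E n'' k'' \<le> E n' k'" using E_mono_le[of k'' n'' k' n'] d d' nk' by auto
      then show False using d' nk' by simp
    qed
  qed
  have le: "hh t \<le> c"
  proof (rule ccontr)
    assume "\<not> hh t \<le> c"
    then obtain n k where nk: "k < 2^n" "c \<le> E n k" "E n k < hh t" using density[OF c, of "hh t"] by auto
    then have "real k / 2^n \<in> T" unfolding T_def by blast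
    then have "t \<le> real k / 2^n" unfolding t_def using T_bdd by (simp add: cInf_lower)
    then have "hh t \<le> E n k" using hh_le nk by simp
    then show False using nk by simp
  qed
  show ?thesis using t0 t1 ge le by (intro exI[of _ t]) auto
qed

end


lemma piece_exists:
  assumes "piece P a r"
  shows "\<exists>h::real\<Rightarrow>real. (\<forall>t. 0 \<le> t \<longrightarrow> t < 1 \<longrightarrow> h t \<in> P) \<and>
             (\<forall>t t'. 0 \<le> t \<longrightarrow> t < t' \<longrightarrow> t' < 1 \<longrightarrow> h t < h t') \<and>
             (\<forall>c\<in>P. \<exists>t. 0 \<le> t \<and> t < 1 \<and> h t = c)"
proof -
  interpret piece P a r by (rule assms)
  show ?thesis
  proof (rule exI[where x=hh], intro conjI allI impI ballI)
    fix t :: real assume "0 \<le> t" "t < 1" show "hh t \<in> P" using \<open>t < 1\<close> by (rule hh_P)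
  next
    fix t t' :: real assume "0 \<le> t" "t < t'" "t' < 1" then show "hh t < hh t'" by (rule hh_strict)
  next
    fix c assume "c \<in> P" then show "\<exists>t. 0 \<le> t \<and> t < 1 \<and> hh t = c" by (rule hh_surj)
  qed
qed

theorem mainTheorem16:
  fixes X :: "'a topology" and F :: "'a set"
  assumes "cont_open_image_of_sorgenfrey X"
    and "closedin X F" and "F \<noteq> {}"
    and "no_isolated_points (subtopology X F)"
  shows "cont_open_image_of_sorgenfrey (subtopology X F)"
proof -
  let ?S = sorgenfrey_line
  obtain f where fc: "continuous_map ?S X f" and fo: "open_map ?S X f" and fs: "range f = topspace X"
    using assms(1) unfolding cont_open_image_of_sorgenfrey_def by auto
  have FX: "F \<subseteq> topspace X" and oc: "openin X (topspace X - F)"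
    using assms(2) unfolding closedin_def by auto
  define G where "G = {t. f t \<in> F}"
  have fX: "\<And>t. f t \<in> topspace X" using fs by auto
  have Gc: "\<And>t. t \<notin> G \<Longrightarrow> \<exists>e>0. \<forall>s\<in>{t..<t+e}. s \<notin> G"
  proof -
    fix t assume t: "t \<notin> G"
    have "openin ?S {x \<in> topspace ?S. f x \<in> topspace X - F}"
      using fc oc unfolding continuous_map_def by blast
    moreover have "{x \<in> topspace ?S. f x \<in> topspace X - F} = - G" using fX unfolding G_def by auto
    ultimately have "openin ?S (- G)" by simp
    then show "\<exists>e>0. \<forall>s\<in>{t..<t+e}. s \<notin> G" using t unfolding S_open by blast
  qed
  have Ginf: "\<And>A. A \<subseteq> G \<Longrightarrow> A \<noteq> {} \<Longrightarrow> bdd_below A \<Longrightarrow> Inf A \<in> G"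
  proof (rule ccontr)
    fix A assume A: "A \<subseteq> G" "A \<noteq> {}" "bdd_below A" "Inf A \<notin> G"
    obtain e where e: "e > 0" "\<forall>s\<in>{Inf A..<Inf A+e}. s \<notin> G" using Gc[OF A(4)] by blast
    obtain s where s: "s \<in> A" "s < Inf A + e" using cInf_lessD[OF A(2), of "Inf A + e"] e by auto
    have "Inf A \<le> s" using s A by (simp add: cInf_lower)
    then show False using e s A by auto
  qed
  have Grd: "\<And>t e. t \<in> G \<Longrightarrow> e > 0 \<Longrightarrow> \<exists>s\<in>G. t < s \<and> s < t + e"
  proof (rule ccontr)
    fix t e assume t: "t \<in> G" "e > 0" "\<not> (\<exists>s\<in>G. t < s \<and> s < t + e)"
    have "openin ?S {t..<t+e}" unfolding S_open
    proof
      fix x assume "x \<in> {t..<t+e}"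
      then show "\<exists>d>0. {x..<x+d} \<subseteq> {t..<t+e}" by (intro exI[of _ "t + e - x"]) auto
    qed
    then have o: "openin X (f ` {t..<t+e})" using fo unfolding open_map_def by blast
    have "f ` {t..<t+e} \<inter> F = {f t}"
    proof
      show "f ` {t..<t+e} \<inter> F \<subseteq> {f t}"
      proof
        fix y assume "y \<in> f ` {t..<t+e} \<inter> F"
        then obtain s where "s \<in> {t..<t+e}" "y = f s" "s \<in> G" unfolding G_def by auto
        then show "y \<in> {f t}" using t by (cases "s = t") auto
      qed
      show "{f t} \<subseteq> f ` {t..<t+e} \<inter> F" using t unfolding G_def by auto
    qed
    then have "openin (subtopology X F) {f t}" using o unfolding openin_subtopology by blast
    moreover have "f t \<in> topspace (subtopology X F)" using t fX unfolding G_def by auto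
    ultimately show False using assms(4) unfolding no_isolated_points_def by blast
  qed
  have "\<forall>b\<in>G. \<exists>h::real\<Rightarrow>real. (\<forall>t. 0 \<le> t \<longrightarrow> t < 1 \<longrightarrow> h t \<in> G \<inter> {b..<b+1}) \<and>
             (\<forall>t t'. 0 \<le> t \<longrightarrow> t < t' \<longrightarrow> t' < 1 \<longrightarrow> h t < h t') \<and>
             (\<forall>c\<in>G \<inter> {b..<b+1}. \<exists>t. 0 \<le> t \<and> t < 1 \<and> h t = c)"
  proof
    fix b assume b: "b \<in> G"
    show "\<exists>h::real\<Rightarrow>real. (\<forall>t. 0 \<le> t \<longrightarrow> t < 1 \<longrightarrow> h t \<in> G \<inter> {b..<b+1}) \<and>
             (\<forall>t t'. 0 \<le> t \<longrightarrow> t < t' \<longrightarrow> t' < 1 \<longrightarrow> h t < h t') \<and>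
             (\<forall>c\<in>G \<inter> {b..<b+1}. \<exists>t. 0 \<le> t \<and> t < 1 \<and> h t = c)"
    proof (rule piece_exists)
      show "piece (G \<inter> {b..<b+1}) b (b+1)"
      proof (unfold_locales)
        show "b \<in> G \<inter> {b..<b+1}" using b by auto
        show "G \<inter> {b..<b+1} \<subseteq> {b..<b+1}" by auto
      next
        fix A assume A: "A \<subseteq> G \<inter> {b..<b+1}" "A \<noteq> {}"
        have bdd: "bdd_below A" using A by (intro bdd_belowI[of _ b]) auto
        have "Inf A \<in> G" using Ginf[OF _ A(2) bdd] A by auto
        moreover have "b \<le> Inf A" using A by (intro cInf_greatest) auto
        moreover obtain z where z: "z \<in> A" using A by auto
        moreover have "Inf A \<le> z" using z bdd by (simp add: cInf_lower)
        moreover have "z < b + 1" using z A by auto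
        ultimately show "Inf A \<in> G \<inter> {b..<b+1}" by simp
      next
        fix x e assume x: "x \<in> G \<inter> {b..<b+1}" and e: "(e::real) > 0"
        obtain s where s: "s \<in> G" "x < s" "s < x + min e (b + 1 - x)" using Grd[of x "min e (b + 1 - x)"] x e by auto
        have "s < x + e" "s < b + 1" using s(3) min.cobounded1[of e "b + 1 - x"] min.cobounded2[of e "b + 1 - x"] by linarith+
        then show "\<exists>y\<in>G \<inter> {b..<b+1}. x < y \<and> y < x + e" using x s by (intro bexI[of _ s]) auto
      qed
    qed
  qed
  note ex = bchoice[OF this]
  define hm where "hm = (SOME hm::real\<Rightarrow>real\<Rightarrow>real. \<forall>b\<in>G. (\<forall>t. 0 \<le> t \<longrightarrow> t < 1 \<longrightarrow> hm b t \<in> G \<inter> {b..<b+1}) \<and>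
             (\<forall>t t'. 0 \<le> t \<longrightarrow> t < t' \<longrightarrow> t' < 1 \<longrightarrow> hm b t < hm b t') \<and>
             (\<forall>c\<in>G \<inter> {b..<b+1}. \<exists>t. 0 \<le> t \<and> t < 1 \<and> hm b t = c))"
  have hm: "\<forall>b\<in>G. (\<forall>t. 0 \<le> t \<longrightarrow> t < 1 \<longrightarrow> hm b t \<in> G \<inter> {b..<b+1}) \<and>
             (\<forall>t t'. 0 \<le> t \<longrightarrow> t < t' \<longrightarrow> t' < 1 \<longrightarrow> hm b t < hm b t') \<and>
             (\<forall>c\<in>G \<inter> {b..<b+1}. \<exists>t. 0 \<le> t \<and> t < 1 \<and> hm b t = c)"
    unfolding hm_def by (rule someI_ex[OF ex])
  have hmb: "\<And>b. b \<in> G \<Longrightarrow> (\<forall>t. 0 \<le> t \<longrightarrow> t < 1 \<longrightarrow> hm b t \<in> G \<inter> {b..<b+1}) \<and>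
             (\<forall>t t'. 0 \<le> t \<longrightarrow> t < t' \<longrightarrow> t' < 1 \<longrightarrow> hm b t < hm b t') \<and>
             (\<forall>c\<in>G \<inter> {b..<b+1}. \<exists>t. 0 \<le> t \<and> t < 1 \<and> hm b t = c)"
    by (rule bspec[OF hm])
  have hm1: "\<And>b t. b \<in> G \<Longrightarrow> 0 \<le> t \<Longrightarrow> t < 1 \<Longrightarrow> hm b t \<in> G \<inter> {b..<b+1}"
    using hmb by simp
  have hm2: "\<And>b t t'. b \<in> G \<Longrightarrow> 0 \<le> t \<Longrightarrow> t < t' \<Longrightarrow> t' < 1 \<Longrightarrow> hm b t < hm b t'"
    using hmb by simp
  have hm3: "\<And>b c. b \<in> G \<Longrightarrow> c \<in> G \<Longrightarrow> b \<le> c \<Longrightarrow> c < b + 1 \<Longrightarrow> \<exists>t. 0 \<le> t \<and> t < 1 \<and> hm b t = c"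
    using hmb by simp
  have hmle: "\<And>b t s. b \<in> G \<Longrightarrow> 0 \<le> t \<Longrightarrow> t \<le> s \<Longrightarrow> s < 1 \<Longrightarrow> hm b t \<le> hm b s"
  proof -
    fix b t s :: real assume a: "b \<in> G" "0 \<le> t" "t \<le> s" "s < 1"
    show "hm b t \<le> hm b s"
    proof (cases "t = s")
      case False then show ?thesis using hm2[OF a(1,2) _ a(4)] a(3) by simp
    qed simp
  qed
  have hmlt_iff: "\<And>b t s. b \<in> G \<Longrightarrow> 0 \<le> t \<Longrightarrow> t < 1 \<Longrightarrow> 0 \<le> s \<Longrightarrow> s < 1 \<Longrightarrow> hm b t < hm b s \<longleftrightarrow> t < s"
  proof -
    fix b t s :: real assume a: "b \<in> G" "0 \<le> t" "t < 1" "0 \<le> s" "s < 1"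
    show "hm b t < hm b s \<longleftrightarrow> t < s"
    proof
      assume "hm b t < hm b s"
      moreover have "\<not> t < s \<Longrightarrow> hm b s \<le> hm b t" using hmle[OF a(1) a(4) _ a(3)] by simp
      ultimately show "t < s" by linarith
    next
      assume "t < s" then show "hm b t < hm b s" using hm2[OF a(1,2) _ a(5)] by simp
    qed
  qed
  obtain y0 where "y0 \<in> F" using assms(3) by auto
  then have "y0 \<in> range f" using FX fs by auto
  then obtain g0 where "y0 = f g0" by blast
  then have g0: "g0 \<in> G" using \<open>y0 \<in> F\<close> unfolding G_def by simp
  define bq where "bq q = (if G \<inter> {q..} \<noteq> {} then Inf (G \<inter> {q..}) else g0)" for q
  have bqG: "\<And>q. bq q \<in> G"
  proof -
    fix q
    show "bq q \<in> G"
    proof (cases "G \<inter> {q..} \<noteq> {}")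
      case True
      have "bdd_below (G \<inter> {q..})" by (rule bdd_belowI[of _ q]) auto
      then show ?thesis using Ginf[of "G \<inter> {q..}"] True unfolding bq_def by auto
    qed (simp add: bq_def g0)
  qed
  define qq where "qq x = (from_nat_into (\<rat>::real set) (nat \<bar>\<lfloor>x\<rfloor>\<bar>) :: real)" for x :: real
  define H where "H x = hm (bq (qq x)) (x - \<lfloor>x\<rfloor>)" for x :: real
  have fl: "\<And>x::real. 0 \<le> x - \<lfloor>x\<rfloor>" "\<And>x::real. x - \<lfloor>x\<rfloor> < 1" by linarith+
  have HP: "\<And>x. H x \<in> G \<inter> {bq (qq x)..<bq (qq x)+1}"
    unfolding H_def by (rule hm1[OF bqG fl(1) fl(2)])
  have block: "\<And>x y::real. real_of_int \<lfloor>x\<rfloor> \<le> y \<Longrightarrow> y < real_of_int \<lfloor>x\<rfloor> + 1 \<Longrightarrow> \<lfloor>y\<rfloor> = \<lfloor>x\<rfloor>"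
    by (simp add: floor_unique)
  have Hcont: "\<And>x e. e > 0 \<Longrightarrow> \<exists>d>0. \<forall>y\<in>{x..<x+d}. H x \<le> H y \<and> H y < H x + e"
  proof -
    fix x e :: real assume e: "e > 0"
    define b where "b = bq (qq x)"
    define t0 where "t0 = x - \<lfloor>x\<rfloor>"
    have bG: "b \<in> G" unfolding b_def by (rule bqG)
    have Hx: "H x = hm b t0" unfolding H_def b_def t0_def ..
    have HxP: "H x \<in> G" "b \<le> H x" "H x < b + 1" using HP[of x] unfolding b_def by auto
    obtain c where c: "c \<in> G" "H x < c" "c < H x + min e (b + 1 - H x)"
      using Grd[OF HxP(1), of "min e (b + 1 - H x)"] e HxP by auto
    have cb: "c < b + 1" "c < H x + e" using c(3) min.cobounded1[of e "b + 1 - H x"] min.cobounded2[of e "b + 1 - H x"] by linarith+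
    obtain t1 where t1: "0 \<le> t1" "t1 < 1" "hm b t1 = c" using hm3[OF bG c(1)] c(2) cb HxP by force
    have t01: "t0 < t1" using hmlt_iff[OF bG, of t0 t1] t1 c fl Hx unfolding t0_def by auto
    show "\<exists>d>0. \<forall>y\<in>{x..<x+d}. H x \<le> H y \<and> H y < H x + e"
    proof (rule exI[of _ "t1 - t0"], rule conjI)
      show "0 < t1 - t0" using t01 by simp
    next
      show "\<forall>y\<in>{x..<x + (t1 - t0)}. H x \<le> H y \<and> H y < H x + e"
      proof
      fix y assume y: "y \<in> {x..<x + (t1 - t0)}"
      have fy: "\<lfloor>y\<rfloor> = \<lfloor>x\<rfloor>"
      proof (rule block)
        have "x \<le> y" using y by simp
        then show "real_of_int \<lfloor>x\<rfloor> \<le> y" by linarith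
      next
        have "y < x + (t1 - t0)" using y by simp
        then show "y < real_of_int \<lfloor>x\<rfloor> + 1" using t1(2) unfolding t0_def by simp
      qed
      have Hy: "H y = hm b (y - \<lfloor>x\<rfloor>)" unfolding H_def b_def qq_def fy ..
      have r: "t0 \<le> y - \<lfloor>x\<rfloor>" "y - \<lfloor>x\<rfloor> < t1" using y unfolding t0_def by auto
      have "H x \<le> H y" unfolding Hx Hy using hmle[OF bG, of t0 "y - \<lfloor>x\<rfloor>"] r t1 fl unfolding t0_def by auto
      moreover have "H y < c" unfolding Hy using hm2[OF bG, of "y - \<lfloor>x\<rfloor>" t1] r t1 fl t0_def
        by (metis order_trans)
      ultimately show "H x \<le> H y \<and> H y < H x + e" using c by auto
    qed
    qed
  qed
  have Hopen: "\<And>x U. openin ?S U \<Longrightarrow> x \<in> U \<Longrightarrow> \<exists>e>0. G \<inter> {H x..<H x+e} \<subseteq> H ` U"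
  proof -
    fix x U assume U: "openin ?S U" and xU: "x \<in> U"
    obtain d where d: "d > 0" "{x..<x+d} \<subseteq> U" using U xU unfolding S_open by blast
    define b where "b = bq (qq x)"
    define t0 where "t0 = x - \<lfloor>x\<rfloor>"
    have bG: "b \<in> G" unfolding b_def by (rule bqG)
    have Hx: "H x = hm b t0" unfolding H_def b_def t0_def ..
    have t0: "0 \<le> t0" "t0 < 1" unfolding t0_def using fl by auto
    define d' where "d' = min d (1 - t0) / 2"
    define mm where "mm = min d (1 - t0)"
    have m: "mm \<le> d" "mm \<le> 1 - t0" "0 < mm" using d t0 unfolding mm_def by auto
    have dm: "d' = mm / 2" unfolding d'_def mm_def ..
    have d'1: "0 < d'" using m unfolding dm by simp
    have d'2: "d' < d" using m unfolding dm by simp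
    have d'3: "t0 + d' < 1" using m unfolding dm by simp
    note d' = d'1 d'2 d'3
    define t2 where "t2 = t0 + d'"
    have t2: "t0 < t2" "t2 < 1" using d' unfolding t2_def by auto
    have hx2: "H x < hm b t2" unfolding Hx using hm2[OF bG t0(1) t2] .
    show "\<exists>e>0. G \<inter> {H x..<H x+e} \<subseteq> H ` U"
    proof (rule exI[of _ "hm b t2 - H x"], rule conjI)
      show "0 < hm b t2 - H x" using hx2 by simp
    next
      show "G \<inter> {H x..<H x + (hm b t2 - H x)} \<subseteq> H ` U"
      proof
        fix c assume c: "c \<in> G \<inter> {H x..<H x + (hm b t2 - H x)}"
        have HxP: "b \<le> H x" using HP[of x] unfolding b_def by auto
        have "hm b t2 < b + 1" using hm1[OF bG _ t2(2)] t2 t0 by auto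
        then obtain t where t: "0 \<le> t" "t < 1" "hm b t = c" using hm3[OF bG, of c] c HxP by auto
        have "t0 \<le> t"
        proof (rule ccontr)
          assume "\<not> t0 \<le> t"
          then have "hm b t < hm b t0" using hm2[OF bG t(1) _ t0(2)] by simp
          then show False using c t Hx by auto
        qed
        have "t < t2" using hmlt_iff[OF bG t(1,2) _ t2(2)] t2 t0 c t by auto
        define y where "y = real_of_int \<lfloor>x\<rfloor> + t"
        have fy: "\<lfloor>y\<rfloor> = \<lfloor>x\<rfloor>" by (rule block) (use t in \<open>auto simp: y_def\<close>)
        have "y \<in> {x..<x+d}" using \<open>t0 \<le> t\<close> \<open>t < t2\<close> d' unfolding y_def t2_def t0_def by auto
        then have "y \<in> U" using d by auto
        moreover have "H y = c" unfolding H_def qq_def fy using t unfolding y_def b_def qq_def by simp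
        ultimately show "c \<in> H ` U" by (metis image_eqI)
      qed
    qed
  qed
  have Hsurj: "\<And>s. s \<in> G \<Longrightarrow> \<exists>x. H x = s"
  proof -
    fix s assume s: "s \<in> G"
    obtain q where q: "q \<in> \<rat>" "s - 1 < q" "q < s" using Rats_dense_in_real[of "s - 1" s] by auto
    obtain n where n: "from_nat_into (\<rat>::real set) n = q" using from_nat_into_surj[OF countable_rat q(1)] by blast
    have ne: "G \<inter> {q..} \<noteq> {}" using s q by auto
    have bdd: "bdd_below (G \<inter> {q..})" by (rule bdd_belowI[of _ q]) auto
    have bq: "bq q = Inf (G \<inter> {q..})" unfolding bq_def using ne by simp
    have b1: "bq q \<le> s" unfolding bq using s q bdd by (intro cInf_lower) auto
    have b2: "q \<le> bq q" unfolding bq using ne by (intro cInf_greatest) auto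
    obtain t where t: "0 \<le> t" "t < 1" "hm (bq q) t = s" using hm3[OF bqG s b1] b2 q by auto
    define x where "x = real n + t"
    have fx: "\<lfloor>x\<rfloor> = int n" unfolding x_def using t by (intro floor_unique) auto
    have "qq x = q" unfolding qq_def fx using n by simp
    then have "H x = s" unfolding H_def fx using t unfolding x_def by simp
    then show "\<exists>x. H x = s" ..
  qed
  have Hcm: "continuous_map ?S ?S H"
    unfolding continuous_map_def
  proof (rule conjI, simp, intro allI impI)
    fix U assume U: "openin ?S U"
    show "openin ?S {x \<in> topspace ?S. H x \<in> U}" unfolding S_open
    proof
      fix x assume x: "x \<in> {x \<in> topspace ?S. H x \<in> U}"
      then obtain e where e: "e > 0" "{H x..<H x + e} \<subseteq> U" using U unfolding S_open by auto
      obtain d where d: "d > 0" "\<forall>y\<in>{x..<x+d}. H x \<le> H y \<and> H y < H x + e" using Hcont[OF e(1)] by blast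
      show "\<exists>d>0. {x..<x + d} \<subseteq> {x \<in> topspace ?S. H x \<in> U}"
      proof (rule exI[of _ d], rule conjI)
        show "0 < d" by (rule d(1))
        show "{x..<x + d} \<subseteq> {x \<in> topspace ?S. H x \<in> U}"
        proof
          fix y assume "y \<in> {x..<x + d}"
          then have "H y \<in> {H x..<H x + e}" using d(2) by auto
          then show "y \<in> {x \<in> topspace ?S. H x \<in> U}" using e by auto
        qed
      qed
    qed
  qed
  have HG: "\<And>x. H x \<in> G" using HP by auto
  have gcont: "continuous_map ?S (subtopology X F) (f \<circ> H)"
    unfolding continuous_map_in_subtopology
  proof
    show "continuous_map ?S X (f \<circ> H)" by (rule continuous_map_compose[OF Hcm fc])
    show "(f \<circ> H) \<in> topspace ?S \<rightarrow> F" using HG unfolding G_def by auto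
  qed
  have gopen: "open_map ?S (subtopology X F) (f \<circ> H)"
    unfolding open_map_def
  proof (intro allI impI)
    fix U assume U: "openin ?S U"
    have "\<forall>x\<in>U. \<exists>e>0. G \<inter> {H x..<H x+e} \<subseteq> H ` U" using Hopen[OF U] by blast
    note exe = bchoice[OF this]
    define e where "e = (SOME e::real\<Rightarrow>real. \<forall>x\<in>U. e x > 0 \<and> G \<inter> {H x..<H x + e x} \<subseteq> H ` U)"
    have e: "\<forall>x\<in>U. e x > 0 \<and> G \<inter> {H x..<H x + e x} \<subseteq> H ` U"
      unfolding e_def by (rule someI_ex[OF exe])
    define V where "V = (\<Union>x\<in>U. {H x..<H x + e x})"
    have Vo: "openin ?S V" unfolding S_open
    proof
      fix z assume "z \<in> V"
      then obtain x where x: "x \<in> U" "z \<in> {H x..<H x + e x}" unfolding V_def by blast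
      show "\<exists>d>0. {z..<z + d} \<subseteq> V"
      proof (rule exI[of _ "H x + e x - z"], rule conjI)
        show "0 < H x + e x - z" using x by auto
        show "{z..<z + (H x + e x - z)} \<subseteq> V" using x unfolding V_def by auto
      qed
    qed
    have HU: "H ` U = G \<inter> V"
    proof
      show "H ` U \<subseteq> G \<inter> V"
      proof
        fix y assume "y \<in> H ` U"
        then obtain x where x: "x \<in> U" "y = H x" by blast
        then have "y \<in> {H x..<H x + e x}" using e by auto
        then show "y \<in> G \<inter> V" using x HG unfolding V_def by auto
      qed
      show "G \<inter> V \<subseteq> H ` U"
      proof
        fix y assume y: "y \<in> G \<inter> V"
        then obtain x where x: "x \<in> U" "y \<in> {H x..<H x + e x}" unfolding V_def by blast
        then show "y \<in> H ` U" using e y by blast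
      qed
    qed
    have "(f \<circ> H) ` U = f ` V \<inter> F"
    proof
      show "(f \<circ> H) ` U \<subseteq> f ` V \<inter> F"
        unfolding image_comp[symmetric] HU G_def by auto
      show "f ` V \<inter> F \<subseteq> (f \<circ> H) ` U"
      proof
        fix y assume "y \<in> f ` V \<inter> F"
        then obtain v where v: "v \<in> V" "y = f v" "f v \<in> F" by blast
        then have "v \<in> H ` U" using HU unfolding G_def by auto
        then show "y \<in> (f \<circ> H) ` U" using v by auto
      qed
    qed
    moreover have "openin X (f ` V)" using fo Vo unfolding open_map_def by blast
    ultimately show "openin (subtopology X F) ((f \<circ> H) ` U)"
      unfolding openin_subtopology by blast
  qed
  have gsurj: "(f \<circ> H) ` topspace ?S = topspace (subtopology X F)"
  proof
    show "(f \<circ> H) ` topspace ?S \<subseteq> topspace (subtopology X F)"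
      using gcont unfolding continuous_map_def by auto
    show "topspace (subtopology X F) \<subseteq> (f \<circ> H) ` topspace ?S"
    proof
      fix y assume "y \<in> topspace (subtopology X F)"
      then have y: "y \<in> topspace X" "y \<in> F" by auto
      then obtain s where s: "y = f s" using fs by auto
      then have "s \<in> G" using y unfolding G_def by simp
      then obtain x where "H x = s" using Hsurj by blast
      then show "y \<in> (f \<circ> H) ` topspace ?S" using s by auto
    qed
  qed
  show ?thesis unfolding cont_open_image_of_sorgenfrey_def
    using gcont gopen gsurj by blast
qed

end
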